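(* Let $q(y,z|x)$ be a broadcast channel with finite alphabets such that $q(y|x)>0$ and $q(z|x)>0$ for all $x,y,z$. Fix $\lambda\in[0,1]$ and let $p(u,v,w,x)$ (finite alphabets) be a joint distribution with $H(X|U,V,W)=0$ that maximizes $$\lambda I(W;Y)+(1-\lambda)I(W;Z)+I(U;Y|W)+I(V;Z|W)-I(U;V|W)$$ over all finite-alphabet $p(u,v,w,x)$, where $(U,V,W,X,Y,Z)\sim p(u,v,w,x)q(y,z|x)$. If $(u,v,w)$ is such that $p(u,w)>0$ and $p(v,w)>0$, then $p(u,v,w)>0$, and $p(u,w,y)>0$ and $p(v,w,z)>0$ for all $y\in\mathcal Y$, $z\in\mathcal Z$.
   Context: A two-receiver discrete memoryless broadcast channel has finite input alphabet $\mathcal X$, finite output alphabets $\mathcal Y,\mathcal Z$ and transition law $q(y,z|x)$. *)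

theory Defs
  imports Main "HOL-Library.Log_Nat" Complex_Main
begin

text \<open>Discrete distributions are functions into the reals with finite support.
  Auxiliary alphabets of U, V, W are encoded as finite subsets of nat.\<close>

definition supp :: "('a \<Rightarrow> real) \<Rightarrow> 'a set" where
  "supp \<mu> = {a. \<mu> a \<noteq> 0}"

definition is_dist :: "('a \<Rightarrow> real) \<Rightarrow> bool" where
  "is_dist \<mu> \<longleftrightarrow> (\<forall>a. 0 \<le> \<mu> a) \<and> finite (supp \<mu>) \<and> sum \<mu> (supp \<mu>) = 1"

definition marg :: "('a \<Rightarrow> real) \<Rightarrow> ('a \<Rightarrow> 'b) \<Rightarrow> 'b \<Rightarrow> real" where
  "marg \<mu> g b = (\<Sum>a\<in>supp \<mu>. if g a = b then \<mu> a else 0)"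

definition ent :: "('a \<Rightarrow> real) \<Rightarrow> ('a \<Rightarrow> 'b) \<Rightarrow> real" where
  "ent \<mu> g = - (\<Sum>b\<in>g ` supp \<mu>. marg \<mu> g b * log 2 (marg \<mu> g b))"

definition cmi :: "('a \<Rightarrow> real) \<Rightarrow> ('a \<Rightarrow> 'b) \<Rightarrow> ('a \<Rightarrow> 'c) \<Rightarrow> ('a \<Rightarrow> 'd) \<Rightarrow> real" where
  "cmi \<mu> A B C = ent \<mu> (\<lambda>t. (A t, C t)) + ent \<mu> (\<lambda>t. (B t, C t))
                 - ent \<mu> (\<lambda>t. (A t, B t, C t)) - ent \<mu> C"

definition mi :: "('a \<Rightarrow> real) \<Rightarrow> ('a \<Rightarrow> 'b) \<Rightarrow> ('a \<Rightarrow> 'c) \<Rightarrow> real" where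
  "mi \<mu> A B = cmi \<mu> A B (\<lambda>_. ())"

definition is_bc :: "('x::finite \<Rightarrow> 'y::finite \<Rightarrow> 'z::finite \<Rightarrow> real) \<Rightarrow> bool" where
  "is_bc q \<longleftrightarrow> (\<forall>x y z. 0 \<le> q x y z) \<and> (\<forall>x. (\<Sum>y\<in>UNIV. \<Sum>z\<in>UNIV. q x y z) = 1)"

definition joint :: "(nat \<times> nat \<times> nat \<times> 'x \<Rightarrow> real) \<Rightarrow> ('x \<Rightarrow> 'y \<Rightarrow> 'z \<Rightarrow> real)
                     \<Rightarrow> (nat \<times> nat \<times> nat \<times> 'x \<times> 'y \<times> 'z) \<Rightarrow> real" where
  "joint p q = (\<lambda>(u,v,w,x,y,z). p (u,v,w,x) * q x y z)"

definition rvU :: "nat \<times> nat \<times> nat \<times> 'x \<times> 'y \<times> 'z \<Rightarrow> nat" where "rvU = (\<lambda>(u,v,w,x,y,z). u)"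
definition rvV :: "nat \<times> nat \<times> nat \<times> 'x \<times> 'y \<times> 'z \<Rightarrow> nat" where "rvV = (\<lambda>(u,v,w,x,y,z). v)"
definition rvW :: "nat \<times> nat \<times> nat \<times> 'x \<times> 'y \<times> 'z \<Rightarrow> nat" where "rvW = (\<lambda>(u,v,w,x,y,z). w)"
definition rvX :: "nat \<times> nat \<times> nat \<times> 'x \<times> 'y \<times> 'z \<Rightarrow> 'x" where "rvX = (\<lambda>(u,v,w,x,y,z). x)"
definition rvY :: "nat \<times> nat \<times> nat \<times> 'x \<times> 'y \<times> 'z \<Rightarrow> 'y" where "rvY = (\<lambda>(u,v,w,x,y,z). y)"
definition rvZ :: "nat \<times> nat \<times> nat \<times> 'x \<times> 'y \<times> 'z \<Rightarrow> 'z" where "rvZ = (\<lambda>(u,v,w,x,y,z). z)"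

definition objective :: "real \<Rightarrow> ('x::finite \<Rightarrow> 'y::finite \<Rightarrow> 'z::finite \<Rightarrow> real)
                         \<Rightarrow> (nat \<times> nat \<times> nat \<times> 'x \<Rightarrow> real) \<Rightarrow> real" where
  "objective lam q p =
     (let J = joint p q in
        lam * mi J rvW rvY + (1 - lam) * mi J rvW rvZ
        + cmi J rvU rvY rvW + cmi J rvV rvZ rvW - cmi J rvU rvV rvW)"

end

theory Submission
  imports Defs
begin


lemma ln_lip:
  fixes a t M :: real
  assumes a: "a > 0" and t1: "a/2 \<le> t" and t2: "t \<le> M"
  shows "\<bar>t*ln t - a*ln a\<bar> \<le> (2 + \<bar>ln (a/2)\<bar> + \<bar>ln M\<bar>) * \<bar>t-a\<bar>"
proof -
  have t: "t > 0" using a t1 by linarith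
  have l1: "ln (a/2) \<le> ln t" using t1 a by simp
  have l2: "ln t \<le> ln M" using t2 t by simp
  have lnt: "\<bar>ln t\<bar> \<le> \<bar>ln (a/2)\<bar> + \<bar>ln M\<bar>" using l1 l2 by linarith
  have e1: "\<bar>(t-a)*ln t\<bar> \<le> (\<bar>ln (a/2)\<bar> + \<bar>ln M\<bar>) * \<bar>t-a\<bar>"
  proof -
    have "\<bar>ln t\<bar> * \<bar>t-a\<bar> \<le> (\<bar>ln (a/2)\<bar> + \<bar>ln M\<bar>) * \<bar>t-a\<bar>"
      by (rule mult_right_mono[OF lnt]) simp
    thus ?thesis by (simp add: abs_mult mult.commute)
  qed
  have e2: "\<bar>a*(ln t - ln a)\<bar> \<le> 2*\<bar>t-a\<bar>"
  proof (cases "a \<le> t")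
    case True
    have "ln (t/a) \<le> t/a - 1" using t a by (intro ln_le_minus_one) simp
    hence "ln t - ln a \<le> t/a - 1" using t a by (simp add: ln_div)
    hence "a*(ln t - ln a) \<le> a*(t/a - 1)" using a by (simp add: mult_left_mono)
    also have "\<dots> = t - a" using a by (simp add: field_simps)
    finally have "a*(ln t - ln a) \<le> t - a" .
    moreover have "ln a \<le> ln t" using True a by simp
    hence "0 \<le> a*(ln t - ln a)" using a by simp
    ultimately have "\<bar>a*(ln t - ln a)\<bar> \<le> t - a" by simp
    thus ?thesis using True by simp
  next
    case False
    have "ln (a/t) \<le> a/t - 1" using t a by (intro ln_le_minus_one) simp
    hence "ln a - ln t \<le> a/t - 1" using t a by (simp add: ln_div)
    hence "a*(ln a - ln t) \<le> a*(a/t - 1)" using a by (simp add: mult_left_mono)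
    also have "\<dots> = (a/t)*(a - t)" using t by (simp add: field_simps)
    also have "\<dots> \<le> 2*(a-t)" using False t t1 by (intro mult_right_mono) (simp_all add: field_simps)
    finally have "a*(ln a - ln t) \<le> 2*(a - t)" .
    moreover have "ln t \<le> ln a" using False a t by simp
    hence "0 \<le> a*(ln a - ln t)" using a by simp
    moreover have "a*(ln t - ln a) = - (a*(ln a - ln t))" by (simp add: algebra_simps)
    ultimately have "\<bar>a*(ln t - ln a)\<bar> \<le> 2*(a - t)" by simp
    thus ?thesis using False by simp
  qed
  have "t*ln t - a*ln a = (t-a)*ln t + a*(ln t - ln a)" by (simp add: algebra_simps)
  hence "\<bar>t*ln t - a*ln a\<bar> \<le> \<bar>(t-a)*ln t\<bar> + \<bar>a*(ln t - ln a)\<bar>" by simp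
  thus ?thesis using e1 e2 by (simp add: algebra_simps)
qed

definition psi :: "real \<Rightarrow> real" where "psi t = t * log 2 t"

lemma psi0[simp]: "psi 0 = 0" by (simp add: psi_def)

lemma psi_mix:
  fixes a c e :: real
  assumes a: "a \<ge> 0" and c: "c \<ge> 0" and e: "0 \<le> e" "e \<le> 1/2" and ac: "a = 0 \<Longrightarrow> c = 0"
  shows "\<bar>psi ((1-e)*a + e*c) - psi a\<bar> \<le> ((2 + \<bar>ln (a/2)\<bar> + \<bar>ln (a+c)\<bar>) * (a+c) / ln 2) * e"
proof (cases "a = 0")
  case True thus ?thesis using ac by simp
next
  case False
  hence a: "a > 0" using a by simp
  let ?t = "(1-e)*a + e*c"
  have x1: "0 \<le> (1/2 - e)*a" using a e by simp
  have x2: "0 \<le> e*c" using c e by simp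
  have x3: "0 \<le> e*a" using a e by simp
  have x4: "0 \<le> (1-e)*c" using c e by simp
  have t1: "a/2 \<le> ?t" using x1 x2 by (simp add: algebra_simps)
  have t2: "?t \<le> a + c" using x3 x4 by (simp add: algebra_simps)
  have "?t - a = e*(c-a)" by (simp add: algebra_simps)
  hence "\<bar>?t - a\<bar> = e*\<bar>c-a\<bar>" using e by (simp add: abs_mult)
  also have "\<dots> \<le> e*(a+c)" using a c e by (intro mult_left_mono) auto
  finally have d: "\<bar>?t - a\<bar> \<le> (a+c)*e" by (simp add: mult.commute)
  have L: "\<bar>?t*ln ?t - a*ln a\<bar> \<le> (2 + \<bar>ln (a/2)\<bar> + \<bar>ln (a+c)\<bar>) * \<bar>?t-a\<bar>"
    by (rule ln_lip[OF a t1 t2])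
  also have "\<dots> \<le> (2 + \<bar>ln (a/2)\<bar> + \<bar>ln (a+c)\<bar>) * ((a+c)*e)"
    by (rule mult_left_mono[OF d]) simp
  finally have L2: "\<bar>?t*ln ?t - a*ln a\<bar> \<le> (2 + \<bar>ln (a/2)\<bar> + \<bar>ln (a+c)\<bar>) * ((a+c)*e)" .
  have "psi ?t - psi a = (?t*ln ?t - a*ln a)/ln 2" by (simp add: psi_def log_def field_simps)
  hence "\<bar>psi ?t - psi a\<bar> = \<bar>?t*ln ?t - a*ln a\<bar>/ln 2" by simp
  also have "\<dots> \<le> (2 + \<bar>ln (a/2)\<bar> + \<bar>ln (a+c)\<bar>) * ((a+c)*e) / ln 2"
    using L2 by (simp add: divide_right_mono)
  finally show ?thesis by (simp add: algebra_simps)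
qed



lemma sum_bound:
  fixes a c :: "'b \<Rightarrow> real"
  assumes B: "finite B" and h: "\<forall>b\<in>B. a b \<ge> 0 \<and> c b \<ge> 0 \<and> (a b = 0 \<longrightarrow> c b = 0)"
  shows "\<exists>K. \<forall>e. 0 \<le> e \<and> e \<le> 1/2 \<longrightarrow>
           \<bar>\<Sum>b\<in>B. psi ((1-e)*a b + e*c b) - psi (a b)\<bar> \<le> K*e"
proof -
  define Kb where "Kb b = (2 + \<bar>ln (a b/2)\<bar> + \<bar>ln (a b + c b)\<bar>) * (a b + c b) / ln 2" for b
  show ?thesis
  proof (intro exI allI impI)
    fix e :: real assume e: "0 \<le> e \<and> e \<le> 1/2"
    have "\<bar>\<Sum>b\<in>B. psi ((1-e)*a b + e*c b) - psi (a b)\<bar> \<le> (\<Sum>b\<in>B. \<bar>psi ((1-e)*a b + e*c b) - psi (a b)\<bar>)"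
      by (rule sum_abs)
    also have "\<dots> \<le> (\<Sum>b\<in>B. Kb b * e)"
      using h e unfolding Kb_def by (intro sum_mono psi_mix) auto
    also have "\<dots> = (\<Sum>b\<in>B. Kb b) * e" by (simp add: sum_distrib_right)
    finally show "\<bar>\<Sum>b\<in>B. psi ((1-e)*a b + e*c b) - psi (a b)\<bar> \<le> (\<Sum>b\<in>B. Kb b) * e" .
  qed
qed


lemma marg_superset: assumes "finite A" "supp \<mu> \<subseteq> A"
  shows "marg \<mu> g b = (\<Sum>a\<in>A. if g a = b then \<mu> a else 0)"
  unfolding marg_def
proof (rule sum.mono_neutral_left[OF assms])
  show "\<forall>i\<in>A - supp \<mu>. (if g i = b then \<mu> i else 0) = 0"
    by (simp add: supp_def)
qed

lemma marg_nonneg: "\<forall>a. 0 \<le> \<mu> a \<Longrightarrow> 0 \<le> marg \<mu> g b"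
  unfolding marg_def by (intro sum_nonneg) simp

lemma marg_nz: assumes "marg \<mu> g b \<noteq> 0" shows "\<exists>a\<in>supp \<mu>. g a = b"
proof (rule ccontr)
  assume a: "\<not> (\<exists>a\<in>supp \<mu>. g a = b)"
  have "marg \<mu> g b = 0" unfolding marg_def
  proof (rule sum.neutral)
    show "\<forall>x\<in>supp \<mu>. (if g x = b then \<mu> x else 0) = 0" using a by simp
  qed
  thus False using assms by simp
qed

lemma marg_ge: assumes n: "\<forall>a. 0 \<le> \<mu> a" and f: "finite (supp \<mu>)" and ga: "g a = b" shows "\<mu> a \<le> marg \<mu> g b"
proof (cases "a \<in> supp \<mu>")
  case True
  have "\<mu> a = (\<lambda>a. if g a = b then \<mu> a else 0) a" using ga by simp
  also have "\<dots> \<le> marg \<mu> g b" unfolding marg_def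
  proof (rule member_le_sum[OF True _ f])
    show "\<And>x. x \<in> supp \<mu> - {a} \<Longrightarrow> 0 \<le> (if g x = b then \<mu> x else 0)" using n by simp
  qed
  finally show ?thesis .
next
  case False
  hence "\<mu> a = 0" by (simp add: supp_def)
  thus ?thesis using marg_nonneg[OF n] by simp
qed

lemma marg_factor: assumes n: "\<forall>a. 0 \<le> \<mu> a" and hg: "\<forall>t t'. h t = h t' \<longrightarrow> g t = g t'"
  shows "marg \<mu> h (h t0) \<le> marg \<mu> g (g t0)"
  unfolding marg_def
proof (rule sum_mono)
  fix a
  show "(if h a = h t0 then \<mu> a else 0) \<le> (if g a = g t0 then \<mu> a else 0)"
  proof (cases "h a = h t0")
    case True
    hence "g a = g t0" using hg by blast
    thus ?thesis using True by simp
  next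
    case False thus ?thesis using n by simp
  qed
qed


lemma ent_superset: assumes "finite A" "supp \<mu> \<subseteq> A"
  shows "ent \<mu> g = - (\<Sum>b\<in>g`A. psi (marg \<mu> g b))"
proof -
  have "(\<Sum>b\<in>g`supp \<mu>. psi (marg \<mu> g b)) = (\<Sum>b\<in>g`A. psi (marg \<mu> g b))"
  proof (rule sum.mono_neutral_left)
    show "\<forall>i\<in>g ` A - g ` supp \<mu>. psi (marg \<mu> g i) = 0"
    proof
      fix i assume "i \<in> g ` A - g ` supp \<mu>"
      hence ni: "i \<notin> g ` supp \<mu>" by simp
      have "marg \<mu> g i = 0"
      proof (rule ccontr)
        assume "marg \<mu> g i \<noteq> 0"
        from marg_nz[OF this] obtain a where a1: "a \<in> supp \<mu>" and a2: "g a = i" ..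
        have "i \<in> g ` supp \<mu>" by (rule rev_image_eqI[where f=g, OF a1 a2[symmetric]])
        thus False using ni by contradiction
      qed
      thus "psi (marg \<mu> g i) = 0" by simp
    qed
    show "finite (g`A)" using assms(1) by (rule finite_imageI)
    show "g`supp \<mu> \<subseteq> g`A" using assms(2) by (rule image_mono)
  qed
  thus ?thesis unfolding ent_def psi_def by (simp only:)
qed

definition mix :: "real \<Rightarrow> ('a \<Rightarrow> real) \<Rightarrow> ('a \<Rightarrow> real) \<Rightarrow> 'a \<Rightarrow> real" where
  "mix e \<mu>1 \<mu>2 = (\<lambda>a. (1-e)*\<mu>1 a + e*\<mu>2 a)"

lemma supp_mix: "supp (mix e \<mu>1 \<mu>2) \<subseteq> supp \<mu>1 \<union> supp \<mu>2"
proof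
  fix a assume "a \<in> supp (mix e \<mu>1 \<mu>2)"
  hence h: "(1-e)*\<mu>1 a + e*\<mu>2 a \<noteq> 0" by (simp add: supp_def mix_def)
  show "a \<in> supp \<mu>1 \<union> supp \<mu>2"
  proof (rule ccontr)
    assume "a \<notin> supp \<mu>1 \<union> supp \<mu>2"
    hence "\<mu>1 a = 0" "\<mu>2 a = 0" by (simp_all add: supp_def)
    thus False using h by simp
  qed
qed

lemma marg_mix: assumes "finite A" "supp \<mu>1 \<subseteq> A" "supp \<mu>2 \<subseteq> A"
  shows "marg (mix e \<mu>1 \<mu>2) g b = (1-e)*marg \<mu>1 g b + e*marg \<mu>2 g b"
proof -
  have s: "supp (mix e \<mu>1 \<mu>2) \<subseteq> A" by (rule subset_trans[OF supp_mix Un_least[OF assms(2,3)]])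
  have "(\<Sum>a\<in>A. if g a = b then mix e \<mu>1 \<mu>2 a else 0) = (\<Sum>a\<in>A. (1-e)*(if g a = b then \<mu>1 a else 0) + e*(if g a = b then \<mu>2 a else 0))"
    by (rule sum.cong) (simp_all add: mix_def)
  also have "\<dots> = (1-e)*(\<Sum>a\<in>A. if g a = b then \<mu>1 a else 0) + e*(\<Sum>a\<in>A. if g a = b then \<mu>2 a else 0)"
    by (simp only: sum.distrib sum_distrib_left)
  finally show ?thesis
    unfolding marg_superset[OF assms(1) s] marg_superset[OF assms(1,2)] marg_superset[OF assms(1,3)] .
qed

lemma ent_mix_diff: assumes "finite (supp \<mu>1)" "finite (supp \<mu>2)"
  shows "ent (mix e \<mu>1 \<mu>2) g - ent \<mu>1 g = - (\<Sum>b\<in>g`(supp \<mu>1 \<union> supp \<mu>2).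
      psi ((1-e)*marg \<mu>1 g b + e*marg \<mu>2 g b) - psi (marg \<mu>1 g b))"
proof -
  let ?A = "supp \<mu>1 \<union> supp \<mu>2"
  have f: "finite ?A" using assms by simp
  have s: "supp (mix e \<mu>1 \<mu>2) \<subseteq> ?A" by (rule supp_mix)
  have s1: "supp \<mu>1 \<subseteq> ?A" by (rule Un_upper1)
  have s2: "supp \<mu>2 \<subseteq> ?A" by (rule Un_upper2)
  have "ent (mix e \<mu>1 \<mu>2) g = - (\<Sum>b\<in>g`?A. psi ((1-e)*marg \<mu>1 g b + e*marg \<mu>2 g b))"
    unfolding ent_superset[OF f s] marg_mix[OF f s1 s2] ..
  moreover have "ent \<mu>1 g = - (\<Sum>b\<in>g`?A. psi (marg \<mu>1 g b))"
    by (rule ent_superset[OF f s1])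
  ultimately show ?thesis by (simp only: sum_subtractf)
qed


lemma smooth_gen:
  assumes n1: "\<forall>a. 0 \<le> \<mu>1 a" and n2: "\<forall>a. 0 \<le> \<mu>2 a"
    and f1: "finite (supp \<mu>1)" and f2: "finite (supp \<mu>2)"
    and pos: "\<forall>t\<in>supp \<mu>2. marg \<mu>1 g (g t) > 0"
  shows "\<exists>K. \<forall>e. 0 \<le> e \<and> e \<le> 1/2 \<longrightarrow> \<bar>ent (mix e \<mu>1 \<mu>2) g - ent \<mu>1 g\<bar> \<le> K*e"
proof -
  have fB: "finite (g`(supp \<mu>1 \<union> supp \<mu>2))" by (rule finite_imageI[OF finite_UnI[OF f1 f2]])
  have "\<forall>b\<in>g`(supp \<mu>1 \<union> supp \<mu>2). marg \<mu>1 g b \<ge> 0 \<and> marg \<mu>2 g b \<ge> 0 \<and> (marg \<mu>1 g b = 0 \<longrightarrow> marg \<mu>2 g b = 0)"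
  proof (intro ballI conjI impI)
    fix b
    show "marg \<mu>1 g b \<ge> 0" by (rule marg_nonneg[OF n1])
    show "marg \<mu>2 g b \<ge> 0" by (rule marg_nonneg[OF n2])
    assume z: "marg \<mu>1 g b = 0"
    show "marg \<mu>2 g b = 0"
    proof (rule ccontr)
      assume "marg \<mu>2 g b \<noteq> 0"
      from marg_nz[OF this] obtain t where t: "t \<in> supp \<mu>2" "g t = b" by blast
      have "marg \<mu>1 g (g t) > 0" using bspec[OF pos t(1)] .
      thus False using z t(2) by simp
    qed
  qed
  from sum_bound[OF fB this] obtain K where
    K: "\<forall>e. 0 \<le> e \<and> e \<le> 1/2 \<longrightarrow> \<bar>\<Sum>b\<in>g`(supp \<mu>1 \<union> supp \<mu>2). psi ((1-e)*marg \<mu>1 g b + e*marg \<mu>2 g b) - psi (marg \<mu>1 g b)\<bar> \<le> K*e"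
    ..
  show ?thesis
  proof (intro exI allI impI)
    fix e :: real assume e: "0 \<le> e \<and> e \<le> 1/2"
    show "\<bar>ent (mix e \<mu>1 \<mu>2) g - ent \<mu>1 g\<bar> \<le> K*e"
      unfolding ent_mix_diff[OF f1 f2] abs_minus_cancel by (rule K[rule_format, OF e])
  qed
qed

lemma sing_gen:
  assumes n1: "\<forall>a. 0 \<le> \<mu>1 a" and n2: "\<forall>a. 0 \<le> \<mu>2 a"
    and f1: "finite (supp \<mu>1)" and f2: "finite (supp \<mu>2)"
    and z: "marg \<mu>1 g b0 = 0" and all: "\<forall>t\<in>supp \<mu>2. g t = b0" and c0: "marg \<mu>2 g b0 > 0"
  shows "\<exists>K. \<forall>e. 0 \<le> e \<and> e \<le> 1/2 \<longrightarrow> ent (mix e \<mu>1 \<mu>2) g - ent \<mu>1 g \<ge> - psi (e * marg \<mu>2 g b0) - K*e"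
proof -
  let ?B = "g`(supp \<mu>1 \<union> supp \<mu>2)"
  have fB: "finite ?B" by (rule finite_imageI[OF finite_UnI[OF f1 f2]])
  have fB': "finite (?B - {b0})" using fB by (rule finite_subset[rotated]) (rule Diff_subset)
  have "marg \<mu>2 g b0 \<noteq> 0" using c0 by simp
  from marg_nz[OF this] obtain t0 where t0: "t0 \<in> supp \<mu>2" "g t0 = b0" by blast
  have b0: "b0 \<in> ?B" using t0 by (intro image_eqI[of _ g t0]) simp_all
  have "\<forall>b\<in>?B - {b0}. marg \<mu>1 g b \<ge> 0 \<and> marg \<mu>2 g b \<ge> 0 \<and> (marg \<mu>1 g b = 0 \<longrightarrow> marg \<mu>2 g b = 0)"
  proof (intro ballI conjI impI)
    fix b assume b: "b \<in> ?B - {b0}"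
    show "marg \<mu>1 g b \<ge> 0" by (rule marg_nonneg[OF n1])
    show "marg \<mu>2 g b \<ge> 0" by (rule marg_nonneg[OF n2])
    show "marg \<mu>2 g b = 0"
    proof (rule ccontr)
      assume "marg \<mu>2 g b \<noteq> 0"
      from marg_nz[OF this] obtain t where t: "t \<in> supp \<mu>2" "g t = b" by blast
      have "g t = b0" using bspec[OF all t(1)] .
      thus False using b t(2) by simp
    qed
  qed
  from sum_bound[OF fB' this] obtain K where
    K: "\<forall>e. 0 \<le> e \<and> e \<le> 1/2 \<longrightarrow> \<bar>\<Sum>b\<in>?B - {b0}. psi ((1-e)*marg \<mu>1 g b + e*marg \<mu>2 g b) - psi (marg \<mu>1 g b)\<bar> \<le> K*e"
    ..
  show ?thesis
  proof (intro exI allI impI)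
    fix e :: real assume e: "0 \<le> e \<and> e \<le> 1/2"
    have eq: "ent (mix e \<mu>1 \<mu>2) g - ent \<mu>1 g = - (psi (e * marg \<mu>2 g b0)
        + (\<Sum>b\<in>?B - {b0}. psi ((1-e)*marg \<mu>1 g b + e*marg \<mu>2 g b) - psi (marg \<mu>1 g b)))"
      unfolding ent_mix_diff[OF f1 f2] sum.remove[OF fB b0] z by simp
    have "\<bar>\<Sum>b\<in>?B - {b0}. psi ((1-e)*marg \<mu>1 g b + e*marg \<mu>2 g b) - psi (marg \<mu>1 g b)\<bar> \<le> K*e"
      by (rule K[rule_format, OF e])
    thus "ent (mix e \<mu>1 \<mu>2) g - ent \<mu>1 g \<ge> - psi (e * marg \<mu>2 g b0) - K*e"
      unfolding eq by linarith
  qed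
qed




lemma supp_joint_sub:
  fixes p :: "nat \<times> nat \<times> nat \<times> 'x \<Rightarrow> real" and q :: "'x \<Rightarrow> 'y \<Rightarrow> 'z \<Rightarrow> real"
  shows "supp (joint p q) \<subseteq> (\<lambda>((a,b,c,d),(y,z)). (a,b,c,d,y,z)) ` (supp p \<times> UNIV)"
proof
  fix t assume t: "t \<in> supp (joint p q)"
  obtain a b c d y z where teq: "t = (a,b,c,d,y,z)" by (cases t) blast
  have "p (a,b,c,d) * q d y z \<noteq> 0" using t teq by (simp add: supp_def joint_def)
  hence "p (a,b,c,d) \<noteq> 0" by auto
  hence m: "((a,b,c,d),(y,z)) \<in> supp p \<times> UNIV" by (simp add: supp_def)
  have "t = (\<lambda>((a,b,c,d),(y,z)). (a,b,c,d,y,z)) ((a,b,c,d),(y,z))" using teq by simp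
  thus "t \<in> (\<lambda>((a,b,c,d),(y,z)). (a,b,c,d,y,z)) ` (supp p \<times> UNIV)"
    by (rule image_eqI[OF _ m])
qed

lemma finite_supp_joint:
  fixes p :: "nat \<times> nat \<times> nat \<times> 'x \<Rightarrow> real" and q :: "'x \<Rightarrow> 'y::finite \<Rightarrow> 'z::finite \<Rightarrow> real"
  assumes "finite (supp p)"
  shows "finite (supp (joint p q))"
proof (rule finite_subset[OF supp_joint_sub])
  have "finite (supp p \<times> (UNIV :: ('y \<times> 'z) set))" using assms by simp
  thus "finite ((\<lambda>((a,b,c,d),(y,z)). (a,b,c,d,y,z)) ` (supp p \<times> (UNIV :: ('y \<times> 'z) set)))"
    by (rule finite_imageI)
qed

lemma joint_nonneg:
  fixes p :: "nat \<times> nat \<times> nat \<times> 'x::finite \<Rightarrow> real" and q :: "'x \<Rightarrow> 'y::finite \<Rightarrow> 'z::finite \<Rightarrow> real"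
  assumes "\<forall>s. 0 \<le> p s" "is_bc q"
  shows "\<forall>t. 0 \<le> joint p q t"
proof
  fix t :: "nat \<times> nat \<times> nat \<times> 'x \<times> 'y \<times> 'z"
  obtain a b c d y z where teq: "t = (a,b,c,d,y,z)" by (cases t) blast
  have "0 \<le> p (a,b,c,d)" using assms(1) by blast
  moreover have "0 \<le> q d y z" using assms(2) unfolding is_bc_def by blast
  ultimately show "0 \<le> joint p q t" using teq by (simp add: joint_def)
qed

lemma joint_mix:
  fixes p1 p2 :: "nat \<times> nat \<times> nat \<times> 'x \<Rightarrow> real" and q :: "'x \<Rightarrow> 'y \<Rightarrow> 'z \<Rightarrow> real"
  shows "joint (mix e p1 p2) q = mix e (joint p1 q) (joint p2 q)"
proof
  fix t :: "nat \<times> nat \<times> nat \<times> 'x \<times> 'y \<times> 'z"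
  obtain a b c d y z where teq: "t = (a,b,c,d,y,z)" by (cases t) blast
  show "joint (mix e p1 p2) q t = mix e (joint p1 q) (joint p2 q) t"
    using teq by (simp add: joint_def mix_def algebra_simps)
qed

lemma supp_delta_joint:
  assumes "t \<in> supp (joint (\<lambda>s. if s = s0 then 1 else 0) q)"
  shows "\<exists>y z. t = (fst s0, fst (snd s0), fst (snd (snd s0)), snd (snd (snd s0)), y, z)"
proof -
  obtain a b c d y z where teq: "t = (a,b,c,d,y,z)" by (cases t) blast
  have "(if (a,b,c,d) = s0 then 1 else 0) * q d y z \<noteq> 0" using assms teq by (simp add: supp_def joint_def)
  hence "(a,b,c,d) = s0" by (cases "(a,b,c,d) = s0") simp_all
  thus ?thesis using teq by auto
qed

lemma posY:
  fixes p :: "nat \<times> nat \<times> nat \<times> 'x::finite \<Rightarrow> real" and q :: "'x \<Rightarrow> 'y::finite \<Rightarrow> 'z::finite \<Rightarrow> real"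
  assumes pd: "is_dist p" and bc: "is_bc q" and qY: "\<forall>x y. (\<Sum>z\<in>UNIV. q x y z) > 0"
    and uw: "marg (joint p q) (\<lambda>t. (rvU t, rvW t)) (u, w) > 0"
  shows "marg (joint p q) (\<lambda>t. (rvU t, rvW t, rvY t)) (u, w, y) > 0"
proof -
  have pn: "\<forall>s. 0 \<le> p s" using pd unfolding is_dist_def by blast
  have qn: "\<forall>x y z. 0 \<le> q x y z" using bc unfolding is_bc_def by blast
  have Jn: "\<forall>t. 0 \<le> joint p q t" by (rule joint_nonneg[OF pn bc])
  have Jf: "finite (supp (joint p q))" using pd unfolding is_dist_def by (intro finite_supp_joint) blast
  have "marg (joint p q) (\<lambda>t. (rvU t, rvW t)) (u, w) \<noteq> 0" using uw by simp
  from marg_nz[OF this] obtain t where t: "t \<in> supp (joint p q)" "(rvU t, rvW t) = (u, w)" ..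
  obtain a b c d y' z' where teq: "t = (a,b,c,d,y',z')" by (cases t) blast
  have abc: "a = u" "c = w" using t(2) teq by (simp_all add: rvU_def rvW_def)
  have "p (a,b,c,d) * q d y' z' \<noteq> 0" using t(1) teq by (simp add: supp_def joint_def)
  hence "p (a,b,c,d) \<noteq> 0" by auto
  hence ppos: "p (u,b,w,d) > 0" using pn abc by (metis less_eq_real_def)
  obtain z where qz: "q d y z > 0"
  proof (rule ccontr)
    assume "\<not> thesis"
    hence "\<forall>z. q d y z \<le> 0" using that by (metis not_le)
    hence "(\<Sum>z\<in>UNIV. q d y z) \<le> 0" by (simp add: sum_nonpos)
    thus False using qY by (metis not_le)
  qed
  have "0 < joint p q (u,b,w,d,y,z)" using ppos qz by (simp add: joint_def)
  also have "\<dots> \<le> marg (joint p q) (\<lambda>t. (rvU t, rvW t, rvY t)) (u, w, y)"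
    by (rule marg_ge[OF Jn Jf]) (simp add: rvU_def rvW_def rvY_def)
  finally show ?thesis .
qed

lemma posZ:
  fixes p :: "nat \<times> nat \<times> nat \<times> 'x::finite \<Rightarrow> real" and q :: "'x \<Rightarrow> 'y::finite \<Rightarrow> 'z::finite \<Rightarrow> real"
  assumes pd: "is_dist p" and bc: "is_bc q" and qZ: "\<forall>x z. (\<Sum>y\<in>UNIV. q x y z) > 0"
    and vw: "marg (joint p q) (\<lambda>t. (rvV t, rvW t)) (v, w) > 0"
  shows "marg (joint p q) (\<lambda>t. (rvV t, rvW t, rvZ t)) (v, w, z) > 0"
proof -
  have pn: "\<forall>s. 0 \<le> p s" using pd unfolding is_dist_def by blast
  have qn: "\<forall>x y z. 0 \<le> q x y z" using bc unfolding is_bc_def by blast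
  have Jn: "\<forall>t. 0 \<le> joint p q t" by (rule joint_nonneg[OF pn bc])
  have Jf: "finite (supp (joint p q))" using pd unfolding is_dist_def by (intro finite_supp_joint) blast
  have "marg (joint p q) (\<lambda>t. (rvV t, rvW t)) (v, w) \<noteq> 0" using vw by simp
  from marg_nz[OF this] obtain t where t: "t \<in> supp (joint p q)" "(rvV t, rvW t) = (v, w)" ..
  obtain a b c d y' z' where teq: "t = (a,b,c,d,y',z')" by (cases t) blast
  have abc: "b = v" "c = w" using t(2) teq by (simp_all add: rvV_def rvW_def)
  have "p (a,b,c,d) * q d y' z' \<noteq> 0" using t(1) teq by (simp add: supp_def joint_def)
  hence "p (a,b,c,d) \<noteq> 0" by auto
  hence ppos: "p (a,v,w,d) > 0" using pn abc by (metis less_eq_real_def)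
  obtain y where qz: "q d y z > 0"
  proof (rule ccontr)
    assume "\<not> thesis"
    hence "\<forall>y. q d y z \<le> 0" using that by (metis not_le)
    hence "(\<Sum>y\<in>UNIV. q d y z) \<le> 0" by (simp add: sum_nonpos)
    thus False using qZ by (metis not_le)
  qed
  have "0 < joint p q (a,v,w,d,y,z)" using ppos qz by (simp add: joint_def)
  also have "\<dots> \<le> marg (joint p q) (\<lambda>t. (rvV t, rvW t, rvZ t)) (v, w, z)"
    by (rule marg_ge[OF Jn Jf]) (simp add: rvV_def rvW_def rvZ_def)
  finally show ?thesis .
qed




lemma sum_supp_superset: assumes "finite A" "supp \<mu> \<subseteq> A" shows "sum \<mu> (supp \<mu>) = sum \<mu> A"
proof (rule sum.mono_neutral_left[OF assms])
  show "\<forall>i\<in>A - supp \<mu>. \<mu> i = 0" by (simp add: supp_def)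
qed

lemma dist_mix:
  assumes d1: "is_dist \<mu>1" and d2: "is_dist \<mu>2" and e: "0 \<le> e" "e \<le> 1"
  shows "is_dist (mix e \<mu>1 \<mu>2)"
proof -
  have n1: "\<forall>a. 0 \<le> \<mu>1 a" and f1: "finite (supp \<mu>1)" and s1: "sum \<mu>1 (supp \<mu>1) = 1"
    using d1 unfolding is_dist_def by blast+
  have n2: "\<forall>a. 0 \<le> \<mu>2 a" and f2: "finite (supp \<mu>2)" and s2: "sum \<mu>2 (supp \<mu>2) = 1"
    using d2 unfolding is_dist_def by blast+
  let ?A = "supp \<mu>1 \<union> supp \<mu>2"
  have fA: "finite ?A" using f1 f2 by (rule finite_UnI)
  have sm: "supp (mix e \<mu>1 \<mu>2) \<subseteq> ?A" by (rule supp_mix)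
  have nn: "\<forall>a. 0 \<le> mix e \<mu>1 \<mu>2 a"
  proof
    fix a
    have "0 \<le> (1-e)*\<mu>1 a" using n1 e by simp
    moreover have "0 \<le> e*\<mu>2 a" using n2 e by simp
    ultimately show "0 \<le> mix e \<mu>1 \<mu>2 a" by (simp add: mix_def)
  qed
  have fm: "finite (supp (mix e \<mu>1 \<mu>2))" by (rule finite_subset[OF sm fA])
  have "sum (mix e \<mu>1 \<mu>2) (supp (mix e \<mu>1 \<mu>2)) = sum (mix e \<mu>1 \<mu>2) ?A"
    by (rule sum_supp_superset[OF fA sm])
  also have "\<dots> = (1-e) * sum \<mu>1 ?A + e * sum \<mu>2 ?A"
    by (simp only: mix_def sum.distrib sum_distrib_left)
  also have "sum \<mu>1 ?A = 1" using s1 sum_supp_superset[OF fA Un_upper1] by simp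
  also have "sum \<mu>2 ?A = 1" using s2 sum_supp_superset[OF fA Un_upper2] by simp
  finally have "sum (mix e \<mu>1 \<mu>2) (supp (mix e \<mu>1 \<mu>2)) = 1" by simp
  thus ?thesis using nn fm unfolding is_dist_def by blast
qed

lemma dist_delta: "is_dist (\<lambda>s. if s = s0 then (1::real) else 0)"
proof -
  have s: "supp (\<lambda>s. if s = s0 then (1::real) else 0) = {s0}" by (auto simp: supp_def)
  show ?thesis unfolding is_dist_def s by simp
qed

lemma lam_bound: fixes l X B :: real assumes "0 \<le> l" "l \<le> 1" "\<bar>X\<bar> \<le> B" shows "- B \<le> l*X"
proof -
  have "\<bar>l*X\<bar> = l*\<bar>X\<bar>" using assms(1) by (simp add: abs_mult)
  also have "\<dots> \<le> \<bar>X\<bar>" using assms(1,2) by (intro mult_left_le_one_le) simp_all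
  finally show ?thesis using assms(3) by linarith
qed

lemma choose_e: fixes c0 K :: real assumes c0: "c0 > 0"
  shows "\<exists>e. 0 < e \<and> e \<le> 1/2 \<and> - psi (e*c0) - K*e > 0"
proof -
  define N where "N = max 1 (K/c0 + log 2 c0 + 1)"
  define e :: real where "e = 2 powr (-N)"
  have epos: "e > 0" unfolding e_def by simp
  have "e \<le> 2 powr (-1)" unfolding e_def N_def by (intro powr_mono) simp_all
  hence ehalf: "e \<le> 1/2" by (simp add: powr_minus)
  have le: "log 2 e = -N" unfolding e_def by simp
  have "psi (e*c0) = e*c0*(log 2 e + log 2 c0)" unfolding psi_def using epos c0 by (simp add: log_mult)
  hence ps: "- psi (e*c0) - K*e = e*(c0*(N - log 2 c0) - K)" using le by (simp add: algebra_simps)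
  have "N - log 2 c0 \<ge> K/c0 + 1" unfolding N_def by simp
  hence "c0*(N - log 2 c0) \<ge> c0*(K/c0 + 1)" using c0 by (intro mult_left_mono) simp_all
  also have "c0*(K/c0 + 1) = K + c0" using c0 by (simp add: field_simps)
  finally have "c0*(N - log 2 c0) - K > 0" using c0 by simp
  hence "- psi (e*c0) - K*e > 0" unfolding ps using epos by simp
  thus ?thesis using epos ehalf by blast
qed


lemma delta_facts:
  fixes q :: "'x::finite \<Rightarrow> 'y::finite \<Rightarrow> 'z::finite \<Rightarrow> real" and s0 :: "nat \<times> nat \<times> nat \<times> 'x"
  assumes bc: "is_bc q"
  shows "\<forall>t. 0 \<le> joint (\<lambda>s. if s = s0 then 1 else 0) q t"
    and "finite (supp (joint (\<lambda>s. if s = s0 then 1 else 0) q))"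
proof -
  have n: "\<forall>s. 0 \<le> (\<lambda>s. if s = s0 then (1::real) else 0) s" by simp
  show "\<forall>t. 0 \<le> joint (\<lambda>s. if s = s0 then 1 else 0) q t" by (rule joint_nonneg[OF n bc])
  have "supp (\<lambda>s. if s = s0 then (1::real) else 0) \<subseteq> {s0}" by (simp add: supp_def)
  hence "finite (supp (\<lambda>s. if s = s0 then (1::real) else 0))" by (rule finite_subset) simp
  thus "finite (supp (joint (\<lambda>s. if s = s0 then 1 else 0) q))" by (rule finite_supp_joint)
qed

lemma smoothY:
  fixes p :: "nat \<times> nat \<times> nat \<times> 'x::finite \<Rightarrow> real" and q :: "'x \<Rightarrow> 'y::finite \<Rightarrow> 'z::finite \<Rightarrow> real"
    and g :: "nat \<times> nat \<times> nat \<times> 'x \<times> 'y \<times> 'z \<Rightarrow> 'b"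
  assumes pd: "is_dist p" and bc: "is_bc q"
    and pos: "\<forall>y. marg (joint p q) (\<lambda>t. (rvU t, rvW t, rvY t)) (u, w, y) > 0"
    and fac: "\<forall>t t'. (rvU t, rvW t, rvY t) = (rvU t', rvW t', rvY t') \<longrightarrow> g t = g t'"
  shows "\<exists>K. \<forall>e. 0 \<le> e \<and> e \<le> 1/2 \<longrightarrow>
     \<bar>ent (mix e (joint p q) (joint (\<lambda>s. if s = (u,v,w,x0) then 1 else 0) q)) g - ent (joint p q) g\<bar> \<le> K*e"
proof -
  have pn: "\<forall>s. 0 \<le> p s" using pd unfolding is_dist_def by blast
  have Jn: "\<forall>t. 0 \<le> joint p q t" by (rule joint_nonneg[OF pn bc])
  have Jf: "finite (supp (joint p q))" using pd unfolding is_dist_def by (intro finite_supp_joint) blast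
  note D = delta_facts[OF bc, of "(u,v,w,x0)"]
  show ?thesis
  proof (rule smooth_gen[OF Jn D(1) Jf D(2)])
    show "\<forall>t\<in>supp (joint (\<lambda>s. if s = (u,v,w,x0) then 1 else 0) q). 0 < marg (joint p q) g (g t)"
    proof
      fix t assume "t \<in> supp (joint (\<lambda>s. if s = (u,v,w,x0) then 1 else 0) q)"
      from supp_delta_joint[OF this] obtain y z where teq: "t = (u,v,w,x0,y,z)" by auto
      have "0 < marg (joint p q) (\<lambda>t. (rvU t, rvW t, rvY t)) (u, w, y)" using pos by blast
      also have "(u, w, y) = (rvU t, rvW t, rvY t)" using teq by (simp add: rvU_def rvW_def rvY_def)
      also have "marg (joint p q) (\<lambda>t. (rvU t, rvW t, rvY t)) (rvU t, rvW t, rvY t) \<le> marg (joint p q) g (g t)"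
        by (rule marg_factor[OF Jn fac])
      finally show "0 < marg (joint p q) g (g t)" .
    qed
  qed
qed

lemma smoothZ:
  fixes p :: "nat \<times> nat \<times> nat \<times> 'x::finite \<Rightarrow> real" and q :: "'x \<Rightarrow> 'y::finite \<Rightarrow> 'z::finite \<Rightarrow> real"
    and g :: "nat \<times> nat \<times> nat \<times> 'x \<times> 'y \<times> 'z \<Rightarrow> 'b"
  assumes pd: "is_dist p" and bc: "is_bc q"
    and pos: "\<forall>z. marg (joint p q) (\<lambda>t. (rvV t, rvW t, rvZ t)) (v, w, z) > 0"
    and fac: "\<forall>t t'. (rvV t, rvW t, rvZ t) = (rvV t', rvW t', rvZ t') \<longrightarrow> g t = g t'"
  shows "\<exists>K. \<forall>e. 0 \<le> e \<and> e \<le> 1/2 \<longrightarrow>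
     \<bar>ent (mix e (joint p q) (joint (\<lambda>s. if s = (u,v,w,x0) then 1 else 0) q)) g - ent (joint p q) g\<bar> \<le> K*e"
proof -
  have pn: "\<forall>s. 0 \<le> p s" using pd unfolding is_dist_def by blast
  have Jn: "\<forall>t. 0 \<le> joint p q t" by (rule joint_nonneg[OF pn bc])
  have Jf: "finite (supp (joint p q))" using pd unfolding is_dist_def by (intro finite_supp_joint) blast
  note D = delta_facts[OF bc, of "(u,v,w,x0)"]
  show ?thesis
  proof (rule smooth_gen[OF Jn D(1) Jf D(2)])
    show "\<forall>t\<in>supp (joint (\<lambda>s. if s = (u,v,w,x0) then 1 else 0) q). 0 < marg (joint p q) g (g t)"
    proof
      fix t assume "t \<in> supp (joint (\<lambda>s. if s = (u,v,w,x0) then 1 else 0) q)"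
      from supp_delta_joint[OF this] obtain y z where teq: "t = (u,v,w,x0,y,z)" by auto
      have "0 < marg (joint p q) (\<lambda>t. (rvV t, rvW t, rvZ t)) (v, w, z)" using pos by blast
      also have "(v, w, z) = (rvV t, rvW t, rvZ t)" using teq by (simp add: rvV_def rvW_def rvZ_def)
      also have "marg (joint p q) (\<lambda>t. (rvV t, rvW t, rvZ t)) (rvV t, rvW t, rvZ t) \<le> marg (joint p q) g (g t)"
        by (rule marg_factor[OF Jn fac])
      finally show "0 < marg (joint p q) g (g t)" .
    qed
  qed
qed

lemma singUVW:
  fixes p :: "nat \<times> nat \<times> nat \<times> 'x::finite \<Rightarrow> real" and q :: "'x \<Rightarrow> 'y::finite \<Rightarrow> 'z::finite \<Rightarrow> real"
  assumes pd: "is_dist p" and bc: "is_bc q"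
    and z: "marg (joint p q) (\<lambda>t. (rvU t, rvV t, rvW t)) (u, v, w) = 0"
  shows "\<exists>c0>0. \<exists>K. \<forall>e. 0 \<le> e \<and> e \<le> 1/2 \<longrightarrow>
     ent (mix e (joint p q) (joint (\<lambda>s. if s = (u,v,w,x0) then 1 else 0) q)) (\<lambda>t. (rvU t, rvV t, rvW t))
       - ent (joint p q) (\<lambda>t. (rvU t, rvV t, rvW t)) \<ge> - psi (e*c0) - K*e"
proof -
  have pn: "\<forall>s. 0 \<le> p s" using pd unfolding is_dist_def by blast
  have Jn: "\<forall>t. 0 \<le> joint p q t" by (rule joint_nonneg[OF pn bc])
  have Jf: "finite (supp (joint p q))" using pd unfolding is_dist_def by (intro finite_supp_joint) blast
  note D = delta_facts[OF bc, of "(u,v,w,x0)"]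
  let ?Jd = "joint (\<lambda>s. if s = (u,v,w,x0) then 1 else 0) q"
  have all: "\<forall>t\<in>supp ?Jd. (rvU t, rvV t, rvW t) = (u, v, w)"
  proof
    fix t assume "t \<in> supp ?Jd"
    from supp_delta_joint[OF this] obtain y z where teq: "t = (u,v,w,x0,y,z)" by auto
    thus "(rvU t, rvV t, rvW t) = (u, v, w)" by (simp add: rvU_def rvV_def rvW_def)
  qed
  have qn: "\<forall>x y z. 0 \<le> q x y z" using bc unfolding is_bc_def by blast
  have q1: "(\<Sum>y\<in>UNIV. \<Sum>z\<in>UNIV. q x0 y z) = 1" using bc unfolding is_bc_def by blast
  obtain y z where qz: "q x0 y z > 0"
  proof (rule ccontr)
    assume "\<not> thesis"
    hence "\<forall>y z. q x0 y z \<le> 0" using that by (metis not_le)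
    hence "(\<Sum>y\<in>UNIV. \<Sum>z\<in>UNIV. q x0 y z) \<le> 0" by (simp add: sum_nonpos)
    thus False using q1 by simp
  qed
  have "0 < ?Jd (u,v,w,x0,y,z)" using qz by (simp add: joint_def)
  also have "\<dots> \<le> marg ?Jd (\<lambda>t. (rvU t, rvV t, rvW t)) (u, v, w)"
    by (rule marg_ge[OF D(1) D(2)]) (simp add: rvU_def rvV_def rvW_def)
  finally have c0: "0 < marg ?Jd (\<lambda>t. (rvU t, rvV t, rvW t)) (u, v, w)" .
  from sing_gen[OF Jn D(1) Jf D(2) z all c0] c0 show ?thesis by blast
qed




lemma lin: fixes l a1 a2 a3 a4 a5 a6 a7 a8 a9 a10 a11 a12 a13 a14 b1 b2 b3 b4 b5 b6 b7 b8 b9 b10 b11 b12 b13 b14 :: real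
  shows "(l*(a1+a2-a3-a4) + (1-l)*(a1+a5-a6-a4) + (a7+a8-a9-a10) + (a11+a12-a13-a10) - (a7+a11-a14-a10))
   - (l*(b1+b2-b3-b4) + (1-l)*(b1+b5-b6-b4) + (b7+b8-b9-b10) + (b11+b12-b13-b10) - (b7+b11-b14-b10))
   = l*((a1-b1)+(a2-b2)-(a3-b3)-(a4-b4)) + (1-l)*((a1-b1)+(a5-b5)-(a6-b6)-(a4-b4))
     + ((a8-b8)-(a9-b9)) + ((a12-b12)-(a13-b13)) - (a10-b10) + (a14-b14)"
  by (simp add: algebra_simps)

lemma obj_unfold:
  "objective lam q p' =
     lam * (ent (joint p' q) (\<lambda>t. (rvW t, ())) + ent (joint p' q) (\<lambda>t. (rvY t, ()))
            - ent (joint p' q) (\<lambda>t. (rvW t, rvY t, ())) - ent (joint p' q) (\<lambda>_. ()))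
   + (1 - lam) * (ent (joint p' q) (\<lambda>t. (rvW t, ())) + ent (joint p' q) (\<lambda>t. (rvZ t, ()))
            - ent (joint p' q) (\<lambda>t. (rvW t, rvZ t, ())) - ent (joint p' q) (\<lambda>_. ()))
   + (ent (joint p' q) (\<lambda>t. (rvU t, rvW t)) + ent (joint p' q) (\<lambda>t. (rvY t, rvW t))
            - ent (joint p' q) (\<lambda>t. (rvU t, rvY t, rvW t)) - ent (joint p' q) rvW)
   + (ent (joint p' q) (\<lambda>t. (rvV t, rvW t)) + ent (joint p' q) (\<lambda>t. (rvZ t, rvW t))
            - ent (joint p' q) (\<lambda>t. (rvV t, rvZ t, rvW t)) - ent (joint p' q) rvW)
   - (ent (joint p' q) (\<lambda>t. (rvU t, rvW t)) + ent (joint p' q) (\<lambda>t. (rvV t, rvW t))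
            - ent (joint p' q) (\<lambda>t. (rvU t, rvV t, rvW t)) - ent (joint p' q) rvW)"
  unfolding objective_def Let_def mi_def cmi_def ..

theorem lemma1:
  fixes q :: "'x::finite \<Rightarrow> 'y::finite \<Rightarrow> 'z::finite \<Rightarrow> real"
    and lam :: real
    and p :: "nat \<times> nat \<times> nat \<times> 'x \<Rightarrow> real"
    and u v w :: nat
  assumes bc: "is_bc q"
    and qY_pos: "\<forall>x y. (\<Sum>z\<in>UNIV. q x y z) > 0"
    and qZ_pos: "\<forall>x z. (\<Sum>y\<in>UNIV. q x y z) > 0"
    and lam: "0 \<le> lam" "lam \<le> 1"
    and p_dist: "is_dist p"
    and H_zero: "ent (joint p q) (\<lambda>t. (rvU t, rvV t, rvW t, rvX t))
                   - ent (joint p q) (\<lambda>t. (rvU t, rvV t, rvW t)) = 0"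
    and p_max: "\<forall>p'::nat \<times> nat \<times> nat \<times> 'x \<Rightarrow> real. is_dist p' \<longrightarrow>
                   objective lam q p' \<le> objective lam q p"
    and uw_pos: "marg (joint p q) (\<lambda>t. (rvU t, rvW t)) (u, w) > 0"
    and vw_pos: "marg (joint p q) (\<lambda>t. (rvV t, rvW t)) (v, w) > 0"
  shows "marg (joint p q) (\<lambda>t. (rvU t, rvV t, rvW t)) (u, v, w) > 0
         \<and> (\<forall>y. marg (joint p q) (\<lambda>t. (rvU t, rvW t, rvY t)) (u, w, y) > 0)
         \<and> (\<forall>z. marg (joint p q) (\<lambda>t. (rvV t, rvW t, rvZ t)) (v, w, z) > 0)"
proof -
  have PY: "\<forall>y. marg (joint p q) (\<lambda>t. (rvU t, rvW t, rvY t)) (u, w, y) > 0"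
    using posY[OF p_dist bc qY_pos uw_pos] by blast
  have PZ: "\<forall>z. marg (joint p q) (\<lambda>t. (rvV t, rvW t, rvZ t)) (v, w, z) > 0"
    using posZ[OF p_dist bc qZ_pos vw_pos] by blast
  define x0 :: 'x where "x0 = undefined"
  let ?\<delta> = "\<lambda>s::nat \<times> nat \<times> nat \<times> 'x. if s = (u,v,w,x0) then (1::real) else 0"
  let ?J = "joint p q"
  let ?Jd = "joint ?\<delta> q"
  have pn: "\<forall>s. 0 \<le> p s" using p_dist unfolding is_dist_def by blast
  have Jn: "\<forall>t. 0 \<le> ?J t" by (rule joint_nonneg[OF pn bc])
  have P1: "marg ?J (\<lambda>t. (rvU t, rvV t, rvW t)) (u, v, w) > 0"
  proof (rule ccontr)
    assume "\<not> ?thesis"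
    moreover have "0 \<le> marg ?J (\<lambda>t. (rvU t, rvV t, rvW t)) (u, v, w)" by (rule marg_nonneg[OF Jn])
    ultimately have z: "marg ?J (\<lambda>t. (rvU t, rvV t, rvW t)) (u, v, w) = 0" by linarith
    from singUVW[OF p_dist bc z, of x0] obtain c0 where c0: "c0 > 0" and exK:
      "\<exists>K. \<forall>e. 0 \<le> e \<and> e \<le> 1/2 \<longrightarrow> ent (mix e ?J ?Jd) (\<lambda>t. (rvU t, rvV t, rvW t)) - ent ?J (\<lambda>t. (rvU t, rvV t, rvW t)) \<ge> - psi (e*c0) - K*e"
      by (elim exE conjE) blast
    from exK obtain KS where KS:
      "\<forall>e. 0 \<le> e \<and> e \<le> 1/2 \<longrightarrow> ent (mix e ?J ?Jd) (\<lambda>t. (rvU t, rvV t, rvW t)) - ent ?J (\<lambda>t. (rvU t, rvV t, rvW t)) \<ge> - psi (e*c0) - KS*e"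
      ..
  have "\<exists>K. \<forall>e. 0 \<le> e \<and> e \<le> 1/2 \<longrightarrow> \<bar>ent (mix e ?J ?Jd) (\<lambda>t. (rvW t, ())) - ent ?J (\<lambda>t. (rvW t, ()))\<bar> \<le> K*e"
    by (rule smoothY[OF p_dist bc PY]) simp
  then obtain K1 where K1: "\<forall>e. 0 \<le> e \<and> e \<le> 1/2 \<longrightarrow> \<bar>ent (mix e ?J ?Jd) (\<lambda>t. (rvW t, ())) - ent ?J (\<lambda>t. (rvW t, ()))\<bar> \<le> K1*e" ..
  have "\<exists>K. \<forall>e. 0 \<le> e \<and> e \<le> 1/2 \<longrightarrow> \<bar>ent (mix e ?J ?Jd) (\<lambda>t. (rvY t, ())) - ent ?J (\<lambda>t. (rvY t, ()))\<bar> \<le> K*e"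
    by (rule smoothY[OF p_dist bc PY]) simp
  then obtain K2 where K2: "\<forall>e. 0 \<le> e \<and> e \<le> 1/2 \<longrightarrow> \<bar>ent (mix e ?J ?Jd) (\<lambda>t. (rvY t, ())) - ent ?J (\<lambda>t. (rvY t, ()))\<bar> \<le> K2*e" ..
  have "\<exists>K. \<forall>e. 0 \<le> e \<and> e \<le> 1/2 \<longrightarrow> \<bar>ent (mix e ?J ?Jd) (\<lambda>t. (rvW t, rvY t, ())) - ent ?J (\<lambda>t. (rvW t, rvY t, ()))\<bar> \<le> K*e"
    by (rule smoothY[OF p_dist bc PY]) simp
  then obtain K3 where K3: "\<forall>e. 0 \<le> e \<and> e \<le> 1/2 \<longrightarrow> \<bar>ent (mix e ?J ?Jd) (\<lambda>t. (rvW t, rvY t, ())) - ent ?J (\<lambda>t. (rvW t, rvY t, ()))\<bar> \<le> K3*e" ..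
  have "\<exists>K. \<forall>e. 0 \<le> e \<and> e \<le> 1/2 \<longrightarrow> \<bar>ent (mix e ?J ?Jd) (\<lambda>_. ()) - ent ?J (\<lambda>_. ())\<bar> \<le> K*e"
    by (rule smoothY[OF p_dist bc PY]) simp
  then obtain K4 where K4: "\<forall>e. 0 \<le> e \<and> e \<le> 1/2 \<longrightarrow> \<bar>ent (mix e ?J ?Jd) (\<lambda>_. ()) - ent ?J (\<lambda>_. ())\<bar> \<le> K4*e" ..
  have "\<exists>K. \<forall>e. 0 \<le> e \<and> e \<le> 1/2 \<longrightarrow> \<bar>ent (mix e ?J ?Jd) (\<lambda>t. (rvZ t, ())) - ent ?J (\<lambda>t. (rvZ t, ()))\<bar> \<le> K*e"
    by (rule smoothZ[OF p_dist bc PZ]) simp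
  then obtain K5 where K5: "\<forall>e. 0 \<le> e \<and> e \<le> 1/2 \<longrightarrow> \<bar>ent (mix e ?J ?Jd) (\<lambda>t. (rvZ t, ())) - ent ?J (\<lambda>t. (rvZ t, ()))\<bar> \<le> K5*e" ..
  have "\<exists>K. \<forall>e. 0 \<le> e \<and> e \<le> 1/2 \<longrightarrow> \<bar>ent (mix e ?J ?Jd) (\<lambda>t. (rvW t, rvZ t, ())) - ent ?J (\<lambda>t. (rvW t, rvZ t, ()))\<bar> \<le> K*e"
    by (rule smoothZ[OF p_dist bc PZ]) simp
  then obtain K6 where K6: "\<forall>e. 0 \<le> e \<and> e \<le> 1/2 \<longrightarrow> \<bar>ent (mix e ?J ?Jd) (\<lambda>t. (rvW t, rvZ t, ())) - ent ?J (\<lambda>t. (rvW t, rvZ t, ()))\<bar> \<le> K6*e" ..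
  have "\<exists>K. \<forall>e. 0 \<le> e \<and> e \<le> 1/2 \<longrightarrow> \<bar>ent (mix e ?J ?Jd) (\<lambda>t. (rvY t, rvW t)) - ent ?J (\<lambda>t. (rvY t, rvW t))\<bar> \<le> K*e"
    by (rule smoothY[OF p_dist bc PY]) simp
  then obtain K8 where K8: "\<forall>e. 0 \<le> e \<and> e \<le> 1/2 \<longrightarrow> \<bar>ent (mix e ?J ?Jd) (\<lambda>t. (rvY t, rvW t)) - ent ?J (\<lambda>t. (rvY t, rvW t))\<bar> \<le> K8*e" ..
  have "\<exists>K. \<forall>e. 0 \<le> e \<and> e \<le> 1/2 \<longrightarrow> \<bar>ent (mix e ?J ?Jd) (\<lambda>t. (rvU t, rvY t, rvW t)) - ent ?J (\<lambda>t. (rvU t, rvY t, rvW t))\<bar> \<le> K*e"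
    by (rule smoothY[OF p_dist bc PY]) simp
  then obtain K9 where K9: "\<forall>e. 0 \<le> e \<and> e \<le> 1/2 \<longrightarrow> \<bar>ent (mix e ?J ?Jd) (\<lambda>t. (rvU t, rvY t, rvW t)) - ent ?J (\<lambda>t. (rvU t, rvY t, rvW t))\<bar> \<le> K9*e" ..
  have "\<exists>K. \<forall>e. 0 \<le> e \<and> e \<le> 1/2 \<longrightarrow> \<bar>ent (mix e ?J ?Jd) (rvW) - ent ?J (rvW)\<bar> \<le> K*e"
    by (rule smoothY[OF p_dist bc PY]) simp
  then obtain K10 where K10: "\<forall>e. 0 \<le> e \<and> e \<le> 1/2 \<longrightarrow> \<bar>ent (mix e ?J ?Jd) (rvW) - ent ?J (rvW)\<bar> \<le> K10*e" ..
  have "\<exists>K. \<forall>e. 0 \<le> e \<and> e \<le> 1/2 \<longrightarrow> \<bar>ent (mix e ?J ?Jd) (\<lambda>t. (rvZ t, rvW t)) - ent ?J (\<lambda>t. (rvZ t, rvW t))\<bar> \<le> K*e"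
    by (rule smoothZ[OF p_dist bc PZ]) simp
  then obtain K12 where K12: "\<forall>e. 0 \<le> e \<and> e \<le> 1/2 \<longrightarrow> \<bar>ent (mix e ?J ?Jd) (\<lambda>t. (rvZ t, rvW t)) - ent ?J (\<lambda>t. (rvZ t, rvW t))\<bar> \<le> K12*e" ..
  have "\<exists>K. \<forall>e. 0 \<le> e \<and> e \<le> 1/2 \<longrightarrow> \<bar>ent (mix e ?J ?Jd) (\<lambda>t. (rvV t, rvZ t, rvW t)) - ent ?J (\<lambda>t. (rvV t, rvZ t, rvW t))\<bar> \<le> K*e"
    by (rule smoothZ[OF p_dist bc PZ]) simp
  then obtain K13 where K13: "\<forall>e. 0 \<le> e \<and> e \<le> 1/2 \<longrightarrow> \<bar>ent (mix e ?J ?Jd) (\<lambda>t. (rvV t, rvZ t, rvW t)) - ent ?J (\<lambda>t. (rvV t, rvZ t, rvW t))\<bar> \<le> K13*e" ..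

    define Kt where "Kt = (K1+K2+K3+K4) + (K1+K5+K6+K4) + K8+K9+K12+K13+K10+KS"
    from choose_e[OF c0, of Kt] obtain e where e: "0 < e" "e \<le> 1/2" and pe: "- psi (e*c0) - Kt*e > 0" by blast
    have e': "0 \<le> e \<and> e \<le> 1/2" using e by simp
    have X1: "\<bar>(ent (mix e ?J ?Jd) (\<lambda>t. (rvW t, ())) - ent ?J (\<lambda>t. (rvW t, ()))) + (ent (mix e ?J ?Jd) (\<lambda>t. (rvY t, ())) - ent ?J (\<lambda>t. (rvY t, ()))) - (ent (mix e ?J ?Jd) (\<lambda>t. (rvW t, rvY t, ())) - ent ?J (\<lambda>t. (rvW t, rvY t, ()))) - (ent (mix e ?J ?Jd) (\<lambda>_. ()) - ent ?J (\<lambda>_. ()))\<bar> \<le> (K1+K2+K3+K4)*e"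
      using K1[rule_format, OF e'] K2[rule_format, OF e'] K3[rule_format, OF e'] K4[rule_format, OF e']
      by (simp add: algebra_simps abs_le_iff)
    have X2: "\<bar>(ent (mix e ?J ?Jd) (\<lambda>t. (rvW t, ())) - ent ?J (\<lambda>t. (rvW t, ()))) + (ent (mix e ?J ?Jd) (\<lambda>t. (rvZ t, ())) - ent ?J (\<lambda>t. (rvZ t, ()))) - (ent (mix e ?J ?Jd) (\<lambda>t. (rvW t, rvZ t, ())) - ent ?J (\<lambda>t. (rvW t, rvZ t, ()))) - (ent (mix e ?J ?Jd) (\<lambda>_. ()) - ent ?J (\<lambda>_. ()))\<bar> \<le> (K1+K5+K6+K4)*e"
      using K1[rule_format, OF e'] K5[rule_format, OF e'] K6[rule_format, OF e'] K4[rule_format, OF e']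
      by (simp add: algebra_simps abs_le_iff)
    have L1: "- ((K1+K2+K3+K4)*e) \<le> lam * ((ent (mix e ?J ?Jd) (\<lambda>t. (rvW t, ())) - ent ?J (\<lambda>t. (rvW t, ()))) + (ent (mix e ?J ?Jd) (\<lambda>t. (rvY t, ())) - ent ?J (\<lambda>t. (rvY t, ()))) - (ent (mix e ?J ?Jd) (\<lambda>t. (rvW t, rvY t, ())) - ent ?J (\<lambda>t. (rvW t, rvY t, ()))) - (ent (mix e ?J ?Jd) (\<lambda>_. ()) - ent ?J (\<lambda>_. ())))"
      by (rule lam_bound[OF lam X1])
    have L2: "- ((K1+K5+K6+K4)*e) \<le> (1 - lam) * ((ent (mix e ?J ?Jd) (\<lambda>t. (rvW t, ())) - ent ?J (\<lambda>t. (rvW t, ()))) + (ent (mix e ?J ?Jd) (\<lambda>t. (rvZ t, ())) - ent ?J (\<lambda>t. (rvZ t, ()))) - (ent (mix e ?J ?Jd) (\<lambda>t. (rvW t, rvZ t, ())) - ent ?J (\<lambda>t. (rvW t, rvZ t, ()))) - (ent (mix e ?J ?Jd) (\<lambda>_. ()) - ent ?J (\<lambda>_. ())))"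
      by (rule lam_bound[OF _ _ X2]) (use lam in simp_all)
    have D: "objective lam q (mix e p ?\<delta>) - objective lam q p =
       lam * ((ent (mix e ?J ?Jd) (\<lambda>t. (rvW t, ())) - ent ?J (\<lambda>t. (rvW t, ()))) + (ent (mix e ?J ?Jd) (\<lambda>t. (rvY t, ())) - ent ?J (\<lambda>t. (rvY t, ()))) - (ent (mix e ?J ?Jd) (\<lambda>t. (rvW t, rvY t, ())) - ent ?J (\<lambda>t. (rvW t, rvY t, ()))) - (ent (mix e ?J ?Jd) (\<lambda>_. ()) - ent ?J (\<lambda>_. ()))) + (1 - lam) * ((ent (mix e ?J ?Jd) (\<lambda>t. (rvW t, ())) - ent ?J (\<lambda>t. (rvW t, ()))) + (ent (mix e ?J ?Jd) (\<lambda>t. (rvZ t, ())) - ent ?J (\<lambda>t. (rvZ t, ()))) - (ent (mix e ?J ?Jd) (\<lambda>t. (rvW t, rvZ t, ())) - ent ?J (\<lambda>t. (rvW t, rvZ t, ()))) - (ent (mix e ?J ?Jd) (\<lambda>_. ()) - ent ?J (\<lambda>_. ())))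
       + ((ent (mix e ?J ?Jd) (\<lambda>t. (rvY t, rvW t)) - ent ?J (\<lambda>t. (rvY t, rvW t))) - (ent (mix e ?J ?Jd) (\<lambda>t. (rvU t, rvY t, rvW t)) - ent ?J (\<lambda>t. (rvU t, rvY t, rvW t)))) + ((ent (mix e ?J ?Jd) (\<lambda>t. (rvZ t, rvW t)) - ent ?J (\<lambda>t. (rvZ t, rvW t))) - (ent (mix e ?J ?Jd) (\<lambda>t. (rvV t, rvZ t, rvW t)) - ent ?J (\<lambda>t. (rvV t, rvZ t, rvW t)))) - (ent (mix e ?J ?Jd) (rvW) - ent ?J (rvW))
       + (ent (mix e ?J ?Jd) (\<lambda>t. (rvU t, rvV t, rvW t)) - ent ?J (\<lambda>t. (rvU t, rvV t, rvW t)))"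
      unfolding obj_unfold[of lam q "mix e p ?\<delta>"] obj_unfold[of lam q p] joint_mix by (rule lin)
    have "objective lam q (mix e p ?\<delta>) - objective lam q p \<ge> - psi (e*c0) - Kt*e"
      unfolding D Kt_def
      using L1 L2 K8[rule_format, OF e'] K9[rule_format, OF e'] K10[rule_format, OF e']
        K12[rule_format, OF e'] K13[rule_format, OF e'] KS[rule_format, OF e']
      by (simp add: algebra_simps abs_le_iff)
    hence gt: "objective lam q (mix e p ?\<delta>) > objective lam q p" using pe by linarith
    have "is_dist (mix e p ?\<delta>)" by (rule dist_mix[OF p_dist dist_delta]) (use e in simp_all)
    hence "objective lam q (mix e p ?\<delta>) \<le> objective lam q p" using p_max by blast
    thus False using gt by linarith
  qed
  show ?thesis using P1 PY PZ by blast
qed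


end
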